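(* Let $R$ be a uniform $L$-layered $1$-semifield$^\dagger$ with $L=\mathbb{Q}_{>0}$, and let $f=(\lambda+a_m)\cdots(\lambda+a_1)\in R[\lambda]$ be separable, with $a_m>_\nu a_{m-1}>_\nu\cdots>_\nu a_1$. Then its layered derivative is $$f'=\prod_{k=2}^m\big(\lambda^{[k/(k-1)]}+a_k\big)=\big(\lambda^{[m/(m-1)]}+a_m\big)\big(\lambda^{[(m-1)/(m-2)]}+a_{m-1}\big)\cdots\big(\lambda^{[2]}+a_2\big).$$
   Context: Concretely, $R=R(\mathbb{Q}_{>0},\mathcal{G})$ with $\mathcal{G}$ a totally ordered abelian group; elements $x^{[\ell]}$ ($x\in\mathcal{G}$, layer $\ell\in\mathbb{Q}_{>0}$), $x^{[k]}y^{[\ell]}=(xy)^{[k\ell]}$, $x^{[k]}+y^{[\ell]}$ equal to $x^{[k]}$ if $x>y$, $y^{[\ell]}$ if $x<y$, $x^{[k+\ell]}$ if $x=y$; a zero element $\mathbb{0}_R$ is formally adjoined. $u<_\nu v$ means the $\mathcal{G}$-value of $u$ is smaller. $\lambda^{[q]}$ denotes $\mathbb{1}^{[q]}\lambda$. A polynomial is separable if it is a constant times a product of linear factors having pairwise $\nu$-inequivalent corner roots. The layered derivative of $\sum_{j=0}^n\alpha_j^{[\ell_j]}\lambda^j$ is $\sum_{j=1}^n\alpha_j^{[j\ell_j]}\lambda^{j-1}$. *)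

theory Defs
  imports Main "HOL.Rat"
begin

text \<open>The totally ordered abelian group G is
  written additively (class linordered_ab_group_add): the group product xy of the paper is
  x + y here and the group unit is 0. An element x^[l] is LEl x l (the layer l is a
  rational, required to be positive where it matters); LZero is the adjoined zero.\<close>

datatype 'g lay = LZero | LEl 'g rat

fun lay_ok :: "'g lay \<Rightarrow> bool" where
  "lay_ok LZero = True"
| "lay_ok (LEl x l) = (0 < l)"

fun ladd :: "'g::linorder lay \<Rightarrow> 'g lay \<Rightarrow> 'g lay" where
  "ladd LZero b = b"
| "ladd a LZero = a"
| "ladd (LEl x k) (LEl y l) =
     (if y < x then LEl x k else if x < y then LEl y l else LEl x (k + l))"

fun lmul :: "'g::ab_semigroup_add lay \<Rightarrow> 'g lay \<Rightarrow> 'g lay" where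
  "lmul LZero b = LZero"
| "lmul a LZero = LZero"
| "lmul (LEl x k) (LEl y l) = LEl (x + y) (k * l)"

fun nu_less :: "'g::linorder lay \<Rightarrow> 'g lay \<Rightarrow> bool" where
  "nu_less _ LZero = False"
| "nu_less LZero (LEl _ _) = True"
| "nu_less (LEl x _) (LEl y _) = (x < y)"

definition lone :: "rat \<Rightarrow> 'g::zero lay" where
  "lone q = LEl 0 q"

text \<open>Polynomials in R[lambda] as coefficient functions: p i is the coefficient of lambda^i.\<close>
type_synonym 'g lpoly = "nat \<Rightarrow> 'g lay"

definition lsum_upto :: "nat \<Rightarrow> (nat \<Rightarrow> 'g::linorder lay) \<Rightarrow> 'g lay" where
  "lsum_upto n f = foldr (\<lambda>i acc. ladd (f i) acc) [0..<Suc n] LZero"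

definition pmul :: "'g::linordered_ab_group_add lpoly \<Rightarrow> 'g lpoly \<Rightarrow> 'g lpoly" where
  "pmul p q = (\<lambda>n. lsum_upto n (\<lambda>i. lmul (p i) (q (n - i))))"

definition pone :: "'g::linordered_ab_group_add lpoly" where
  "pone = (\<lambda>n. if n = 0 then lone 1 else LZero)"

text \<open>The linear polynomial lambda^[q] + a  (lambda^[q] = 1^[q] lambda).\<close>
definition plin :: "rat \<Rightarrow> 'g::linordered_ab_group_add lay \<Rightarrow> 'g lpoly" where
  "plin q a = (\<lambda>n. if n = 0 then a else if n = 1 then lone q else LZero)"

definition pprod :: "'g::linordered_ab_group_add lpoly list \<Rightarrow> 'g lpoly" where
  "pprod ps = foldr pmul ps pone"

fun lay_scale :: "nat \<Rightarrow> 'g lay \<Rightarrow> 'g lay" where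
  "lay_scale j LZero = LZero"
| "lay_scale j (LEl x l) = LEl x (of_nat j * l)"

definition lderiv :: "'g lpoly \<Rightarrow> 'g lpoly" where
  "lderiv p = (\<lambda>n. lay_scale (Suc n) (p (Suc n)))"

end

theory Submission
  imports Defs
begin

lemma lmul_assoc: "lmul (lmul x y) z = lmul x (lmul y (z::'g::ab_semigroup_add lay))"
  by (cases x; cases y; cases z) (simp_all add: add.assoc mult.assoc)

lemma lmul_zero_r[simp]: "lmul x LZero = LZero"
  by (cases x) simp_all

lemma ladd_zero_r[simp]: "ladd x LZero = x"
  by (cases x) simp_all

lemma nu_less_trans: "nu_less x y \<Longrightarrow> nu_less y z \<Longrightarrow> nu_less x (z::'g::linorder lay)"
  by (cases x; cases y; cases z) auto

definition cprod :: "'g::linordered_ab_group_add lay list \<Rightarrow> 'g lay" where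
  "cprod cs = foldr lmul cs (lone 1)"

lemma cprod_Nil[simp]: "cprod [] = lone 1" by (simp add: cprod_def)
lemma cprod_Cons[simp]: "cprod (c # cs) = lmul c (cprod cs)" by (simp add: cprod_def)

lemma cprod_append: "cprod (xs @ ys) = lmul (cprod xs) (cprod ys)"
proof (induction xs)
  case Nil
  show ?case by (cases "cprod ys") (simp_all add: lone_def)
next
  case (Cons x xs) then show ?case by (simp add: lmul_assoc)
qed

lemma cprod_single[simp]: "cprod [d] = d"
  by (cases d) (simp_all add: lone_def)

lemma lmul_lone1[simp]: "lmul x (lone 1) = (x::'g::linordered_ab_group_add lay)"
  by (cases x) (simp_all add: lone_def)

lemma foldr_ladd_zero:
  "\<forall>i\<in>set xs. f i = LZero \<Longrightarrow> foldr (\<lambda>i acc. ladd (f i) acc) xs LZero = LZero"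
  by (induction xs) auto

lemma pmul_plin:
  "pmul (plin q c) R n = (if n = 0 then lmul c (R 0) else ladd (lmul c (R n)) (lmul (lone q) (R (n - 1))))"
proof (cases n)
  case 0 then show ?thesis by (simp add: pmul_def lsum_upto_def plin_def)
next
  case (Suc k)
  have e: "[0..<Suc (Suc k)] = 0 # 1 # [2..<Suc (Suc k)]"
    by (simp add: upt_conv_Cons numeral_2_eq_2)
  have z: "foldr (\<lambda>i acc. ladd (lmul (plin q c i) (R (Suc k - i))) acc) [2..<Suc (Suc k)] LZero = LZero"
    by (rule foldr_ladd_zero) (auto simp: plin_def)
  show ?thesis unfolding Suc pmul_def lsum_upto_def e foldr_Cons o_def z by (simp add: plin_def)
qed

lemma main:
  fixes a :: "nat \<Rightarrow> 'g::linordered_ab_group_add lay"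
  assumes "sorted_wrt (\<lambda>i j. nu_less (a j) (a i)) ks"
  shows "pprod (map (\<lambda>k. plin (Q k) (a k)) ks) n =
    (if n \<le> length ks then lmul (cprod (map a (take (length ks - n) ks)))
        (lone (prod_list (map Q (drop (length ks - n) ks)))) else LZero)"
  using assms
proof (induction ks arbitrary: n)
  case Nil
  then show ?case by (simp add: pprod_def pone_def lone_def)
next
  case (Cons k ks)
  define R where "R = pprod (map (\<lambda>k. plin (Q k) (a k)) ks)"
  have IH: "\<And>n. R n = (if n \<le> length ks then lmul (cprod (map a (take (length ks - n) ks)))
        (lone (prod_list (map Q (drop (length ks - n) ks)))) else LZero)"
    using Cons by (simp add: R_def)
  have P: "pprod (map (\<lambda>k. plin (Q k) (a k)) (k # ks)) = pmul (plin (Q k) (a k)) R"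
    by (simp add: pprod_def R_def)
  have srt: "\<forall>j\<in>set ks. nu_less (a j) (a k)" using Cons.prems by simp
  let ?r = "length ks"
  show ?case
  proof (cases n)
    case 0
    then show ?thesis unfolding P by (simp add: pmul_plin IH lmul_assoc)
  next
    case (Suc m)
    show ?thesis
    proof (cases "m \<le> ?r")
      case False then show ?thesis using Suc unfolding P by (simp add: pmul_plin IH)
    next
      case True
      show ?thesis
      proof (cases "m = ?r")
        case True
        then show ?thesis using Suc unfolding P by (simp add: pmul_plin IH lone_def)
      next
        case False
        with True have mr: "m < ?r" by simp
        define i where "i = ?r - Suc m"
        have ii: "i < ?r" "?r - m = Suc i" using mr by (auto simp: i_def)
        define C where "C = cprod (map a (take i ks))"
        define d where "d = a (ks ! i)"
        define Q1 where "Q1 = prod_list (map Q (drop i ks))"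
        define Q2 where "Q2 = prod_list (map Q (drop (Suc i) ks))"
        have dl: "nu_less d (a k)" using srt ii(1) by (simp add: d_def)
        have tk: "take (Suc i) ks = take i ks @ [ks ! i]" using ii(1) by (simp add: take_Suc_conv_app_nth)
        have A: "lmul (a k) (R (Suc m)) = lmul (a k) (lmul C (lone Q1))"
          using mr by (simp add: IH C_def Q1_def i_def)
        have B: "lmul (lone (Q k)) (R m) = lmul (lone (Q k)) (lmul (lmul C d) (lone Q2))"
          using mr ii by (simp add: IH C_def Q2_def d_def tk cprod_append)
        have G: "Suc ?r - n = Suc i" using Suc mr by (simp add: i_def)
        have T: "lmul (cprod (map a (take (Suc i) (k # ks)))) (lone (prod_list (map Q (drop (Suc i) (k # ks))))) 
            = lmul (a k) (lmul C (lone Q1))"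
          by (simp add: C_def Q1_def lmul_assoc)
        have L: "ladd (lmul (a k) (lmul C (lone Q1))) (lmul (lone (Q k)) (lmul (lmul C d) (lone Q2)))
             = lmul (a k) (lmul C (lone Q1))"
          using dl by (cases "a k"; cases C; cases d) (auto simp: lone_def add.commute add.left_commute)
        show ?thesis using Suc True A B L T G unfolding P by (simp add: pmul_plin)
      qed
    qed
  qed
qed

lemma telescope:
  "prod_list (map (\<lambda>k. of_nat k / of_nat (k - 1)) (rev [2..<Suc (Suc n)])) = (of_nat (Suc n) :: rat)"
proof (induction n)
  case 0 then show ?case by simp
next
  case (Suc n)
  have "rev [2..<Suc (Suc (Suc n))] = Suc (Suc n) # rev [2..<Suc (Suc n)]" by simp
  then show ?case using Suc by (simp add: field_simps)
qed

lemma chain: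
  assumes "\<forall>k\<in>{1..<m}. nu_less (a k) (a (Suc k))"
  shows "1 \<le> i \<Longrightarrow> i < j \<Longrightarrow> j \<le> m \<Longrightarrow> nu_less (a i) (a j)"
proof (induction j)
  case 0 then show ?case by simp
next
  case (Suc j)
  show ?case
  proof (cases "i = j")
    case True then show ?thesis using assms Suc.prems by auto
  next
    case False
    then have "nu_less (a i) (a j)" using Suc by auto
    moreover have "nu_less (a j) (a (Suc j))" using assms Suc.prems False by auto
    ultimately show ?thesis by (rule nu_less_trans)
  qed
qed

theorem proposition9p6:
  fixes a :: "nat \<Rightarrow> 'g::linordered_ab_group_add lay" and m :: nat
  assumes "1 \<le> m"
    and "\<forall>k\<in>{1..m}. lay_ok (a k)"
    and "\<forall>k\<in>{1..<m}. nu_less (a k) (a (Suc k))"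
  shows "lderiv (pprod (map (\<lambda>k. plin 1 (a k)) (rev [1..<Suc m])))
         = pprod (map (\<lambda>k. plin (of_nat k / of_nat (k - 1)) (a k)) (rev [2..<Suc m]))"
proof
  fix n
  have s1: "sorted_wrt (\<lambda>i j. nu_less (a j) (a i)) (rev [l..<Suc m])" if "1 \<le> l" for l
    unfolding sorted_wrt_rev
    by (rule sorted_wrt_mono_rel[OF _ sorted_wrt_upt]) (use chain[OF assms(3)] that in auto)
  have M1: "pprod (map (\<lambda>k. plin 1 (a k)) (rev [1..<Suc m])) j =
    (if j \<le> length (rev [1..<Suc m]) then lmul (cprod (map a (take (length (rev [1..<Suc m]) - j) (rev [1..<Suc m]))))
        (lone (prod_list (map (\<lambda>_. 1) (drop (length (rev [1..<Suc m]) - j) (rev [1..<Suc m]))))) else LZero)" for j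
    by (rule main) (rule s1; simp)
  have M2: "pprod (map (\<lambda>k. plin (of_nat k / of_nat (k - 1)) (a k)) (rev [2..<Suc m])) j =
    (if j \<le> length (rev [2..<Suc m]) then lmul (cprod (map a (take (length (rev [2..<Suc m]) - j) (rev [2..<Suc m]))))
        (lone (prod_list (map (\<lambda>k. of_nat k / of_nat (k - 1)) (drop (length (rev [2..<Suc m]) - j) (rev [2..<Suc m]))))) else LZero)" for j
    by (rule main) (rule s1; simp)
  have r: "rev [1..<Suc m] = rev [2..<Suc m] @ [1]" using assms(1)
    by (simp add: upt_conv_Cons numeral_2_eq_2)
  have pl: "prod_list (map (\<lambda>_. 1::rat) xs) = 1" for xs :: "nat list" by (induction xs) auto
  have D: "lderiv P n = lay_scale (Suc n) (P (Suc n))" for P :: "'g lpoly" by (simp add: lderiv_def)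
  show "lderiv (pprod (map (\<lambda>k. plin 1 (a k)) (rev [1..<Suc m]))) n
         = pprod (map (\<lambda>k. plin (of_nat k / of_nat (k - 1)) (a k)) (rev [2..<Suc m])) n"
  proof (cases "n < m")
    case False
    then show ?thesis unfolding D M1 M2 using assms(1) by auto
  next
    case True
    have tk: "take (m - Suc n) (rev [1..<Suc m]) = take (m - 1 - n) (rev [2..<Suc m])"
      unfolding r using True by (simp; arith)
    have dr: "drop (m - 1 - n) (rev [2..<Suc m]) = rev [2..<Suc (Suc n)]"
    proof -
      have e: "length [2..<Suc m] - (m - 1 - n) = n" using True by (simp; arith)
      have "take n [2..<Suc m] = [2..<2 + n]" using True by (intro take_upt) simp
      then show ?thesis by (simp only: drop_rev e) simp
    qed
    have c1: "Suc n \<le> length (rev [1..<Suc m])" "length (rev [1..<Suc m]) - Suc n = m - Suc n"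
      using True by auto
    have c2: "n \<le> length (rev [2..<Suc m])" "length (rev [2..<Suc m]) - n = m - 1 - n"
      using True by auto
    have tl: "prod_list (map (\<lambda>k. of_nat k / of_nat (k - 1)) (rev [2..<Suc (Suc n)])) = (of_nat (Suc n) :: rat)"
      by (rule telescope)
    show ?thesis unfolding D M1 M2 
      apply (simp only: c1 c2 if_True tk dr tl pl lmul_lone1)
      apply (cases "cprod (map a (take (m - 1 - n) (rev [2..<Suc m])))")
       apply (auto simp: lone_def)
      done
  qed
qed

end
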